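(* Let $(\mathcal A,d)$ be a DGA, let $a,b_1,\dots,b_n\in\mathcal A$ be closed with $|a|$ even and $a\wedge b_i$ exact, and let $\xi_i$ satisfy $d\xi_i=a\wedge b_i$. Let $c=\sum_{i=1}^n \overline{\xi_1}\wedge\cdots\wedge\overline{\xi_{i-1}}\wedge b_i\wedge\xi_{i+1}\wedge\cdots\wedge\xi_n$. Let $\sigma$ be the transposition of $\{1,\dots,n\}$ exchanging $j$ and $j+1$ for some $j$, and let $$c_\sigma=\sum_{i=1}^n \overline{\xi_{\sigma(1)}}\wedge\cdots\wedge\overline{\xi_{\sigma(i-1)}}\wedge b_{\sigma(i)}\wedge\xi_{\sigma(i+1)}\wedge\cdots\wedge\xi_{\sigma(n)}.$$ Then $c=(-1)^{(|b_j|+1)(|b_{j+1}|+1)}c_\sigma$.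
   Context: A DGA is a graded-commutative differential graded algebra over $\mathbb R$; $|x|$ denotes degree and $\overline{x}=(-1)^{|x|}x$. *)

theory Defs
  imports Complex_Main "HOL-Combinatorics.Transposition"
begin

definition sgnr :: "int \<Rightarrow> real" where
  "sgnr k = (if even k then 1 else -1)"

text \<open>The underlying real vector space is the type 'a; A k is the degree-k component,
  m the multiplication (wedge), e the unit, D the differential.\<close>
definition dga :: "(int \<Rightarrow> 'a::real_vector set) \<Rightarrow> ('a \<Rightarrow> 'a \<Rightarrow> 'a) \<Rightarrow> 'a \<Rightarrow> ('a \<Rightarrow> 'a) \<Rightarrow> bool" where
  "dga A m e D \<longleftrightarrow>
     (\<forall>k. subspace (A k)) \<and>
     (\<forall>x. \<exists>K f. finite K \<and> (\<forall>k\<in>K. f k \<in> A k) \<and> x = sum f K) \<and>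
     (\<forall>K f. finite K \<and> (\<forall>k\<in>K. f k \<in> A k) \<and> sum f K = 0 \<longrightarrow> (\<forall>k\<in>K. f k = 0)) \<and>
     (\<forall>x y z. m (x + y) z = m x z + m y z) \<and>
     (\<forall>x y z. m x (y + z) = m x y + m x z) \<and>
     (\<forall>r x y. m (r *\<^sub>R x) y = r *\<^sub>R m x y) \<and>
     (\<forall>r x y. m x (r *\<^sub>R y) = r *\<^sub>R m x y) \<and>
     (\<forall>x y z. m (m x y) z = m x (m y z)) \<and>
     e \<in> A 0 \<and> (\<forall>x. m e x = x \<and> m x e = x) \<and>
     (\<forall>k l x y. x \<in> A k \<longrightarrow> y \<in> A l \<longrightarrow> m x y \<in> A (k + l)) \<and>
     (\<forall>k l x y. x \<in> A k \<longrightarrow> y \<in> A l \<longrightarrow> m x y = sgnr (k * l) *\<^sub>R m y x) \<and>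
     linear D \<and>
     (\<forall>k x. x \<in> A k \<longrightarrow> D x \<in> A (k + 1)) \<and>
     (\<forall>x. D (D x) = 0) \<and>
     (\<forall>k x y. x \<in> A k \<longrightarrow> D (m x y) = m (D x) y + sgnr k *\<^sub>R m x (D y))"

definition mprod :: "('a \<Rightarrow> 'a \<Rightarrow> 'a) \<Rightarrow> 'a \<Rightarrow> 'a list \<Rightarrow> 'a" where
  "mprod m e xs = foldr m xs e"

text \<open>The element
  sum_{i=1}^n bar(xi_1) ... bar(xi_{i-1}) b_i xi_{i+1} ... xi_n,
  where dxi k is the degree of xi k and bar x = (-1)^{|x|} x.\<close>
definition cform :: "('a::real_vector \<Rightarrow> 'a \<Rightarrow> 'a) \<Rightarrow> 'a \<Rightarrow> (nat \<Rightarrow> int) \<Rightarrow> (nat \<Rightarrow> 'a)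
    \<Rightarrow> (nat \<Rightarrow> 'a) \<Rightarrow> nat \<Rightarrow> 'a" where
  "cform m e dxi xi b n =
     (\<Sum>i = 1..n. m (mprod m e (map (\<lambda>k. sgnr (dxi k) *\<^sub>R xi k) [1..<i]))
                    (m (b i) (mprod m e (map xi [i+1..<n+1]))))"

end

theory Submission imports Defs "HOL-Combinatorics.Permutations" begin
lemma dga_sub0:
  assumes "dga A m e D"
  shows "\<forall>k. subspace (A k)"
  by (rule assms[unfolded dga_def, THEN conjunct1])

lemma dga_sl0:
  assumes "dga A m e D"
  shows "\<forall>r x y. m (r *\<^sub>R x) y = r *\<^sub>R m x y"
  by (rule assms[unfolded dga_def, THEN conjunct2, THEN conjunct2, THEN conjunct2, THEN conjunct2, THEN conjunct2, THEN conjunct1])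

lemma dga_sr0:
  assumes "dga A m e D"
  shows "\<forall>r x y. m x (r *\<^sub>R y) = r *\<^sub>R m x y"
  by (rule assms[unfolded dga_def, THEN conjunct2, THEN conjunct2, THEN conjunct2, THEN conjunct2, THEN conjunct2, THEN conjunct2, THEN conjunct1])

lemma dga_assoc0:
  assumes "dga A m e D"
  shows "\<forall>x y z. m (m x y) z = m x (m y z)"
  by (rule assms[unfolded dga_def, THEN conjunct2, THEN conjunct2, THEN conjunct2, THEN conjunct2, THEN conjunct2, THEN conjunct2, THEN conjunct2, THEN conjunct1])

lemma dga_unit0:
  assumes "dga A m e D"
  shows "\<forall>x. m e x = x \<and> m x e = x"
  by (rule assms[unfolded dga_def, THEN conjunct2, THEN conjunct2, THEN conjunct2, THEN conjunct2, THEN conjunct2, THEN conjunct2, THEN conjunct2, THEN conjunct2, THEN conjunct2, THEN conjunct1])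

lemma dga_comm0:
  assumes "dga A m e D"
  shows "\<forall>k l x y. x \<in> A k \<longrightarrow> y \<in> A l \<longrightarrow> m x y = sgnr (k * l) *\<^sub>R m y x"
  by (rule assms[unfolded dga_def, THEN conjunct2, THEN conjunct2, THEN conjunct2, THEN conjunct2, THEN conjunct2, THEN conjunct2, THEN conjunct2, THEN conjunct2, THEN conjunct2, THEN conjunct2, THEN conjunct2, THEN conjunct1])

lemma sgnr_add: "sgnr (a + b) = sgnr a * sgnr b"
  by (auto simp: sgnr_def)

lemma sgnr_cong: "even a = even b \<Longrightarrow> sgnr a = sgnr b"
  by (simp add: sgnr_def)

lemma mprod_Nil: "mprod m e [] = e" by (simp add: mprod_def)
lemma mprod_Cons: "mprod m e (x # xs) = m x (mprod m e xs)" by (simp add: mprod_def)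

lemma mprod_append:
  assumes "dga A m e D"
  shows "mprod m e (xs @ ys) = m (mprod m e xs) (mprod m e ys)"
proof (induction xs)
  case Nil then show ?case using dga_unit0[OF assms] by (simp add: mprod_Nil)
next
  case (Cons x xs) then show ?case using dga_assoc0[OF assms] by (simp add: mprod_Cons)
qed

lemma mprod_swap:
  assumes "dga A m e D" "u \<in> A k" "v \<in> A l"
  shows "mprod m e (xs @ u # v # ys) = sgnr (k * l) *\<^sub>R mprod m e (xs @ v # u # ys)"
proof -
  have c: "m u v = sgnr (k * l) *\<^sub>R m v u" using dga_comm0[OF assms(1)] assms(2,3) by blast
  have as: "\<And>x y z. m (m x y) z = m x (m y z)" using dga_assoc0[OF assms(1)] by blast
  have sl: "\<And>r x y. m (r *\<^sub>R x) y = r *\<^sub>R m x y" using dga_sl0[OF assms(1)] by blast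
  have sr: "\<And>r x y. m x (r *\<^sub>R y) = r *\<^sub>R m x y" using dga_sr0[OF assms(1)] by blast
  have "m u (m v Y) = sgnr (k * l) *\<^sub>R m v (m u Y)" for Y
  proof -
    have "m u (m v Y) = m (m u v) Y" by (simp add: as)
    also have "\<dots> = sgnr (k * l) *\<^sub>R m v (m u Y)" by (simp add: c sl as)
    finally show ?thesis .
  qed
  then show ?thesis
    by (simp add: mprod_append[OF assms(1)] mprod_Cons sr)
qed

lemma mprod_scale:
  assumes "dga A m e D"
  shows "mprod m e (xs @ (r *\<^sub>R u) # ys) = r *\<^sub>R mprod m e (xs @ u # ys)"
proof -
  have sl: "\<And>r x y. m (r *\<^sub>R x) y = r *\<^sub>R m x y" using dga_sl0[OF assms(1)] by blast
  have sr: "\<And>r x y. m x (r *\<^sub>R y) = r *\<^sub>R m x y" using dga_sr0[OF assms(1)] by blast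
  show ?thesis by (simp add: mprod_append[OF assms(1)] mprod_Cons sl sr)
qed

lemma cform_alt:
  assumes "dga A m e D"
  shows "cform m e d xi b n = (\<Sum>i = 1..n. mprod m e (map (\<lambda>k. sgnr (d k) *\<^sub>R xi k) [1..<i] @ b i # map xi [i+1..<n+1]))"
  unfolding cform_def by (simp add: mprod_append[OF assms] mprod_Cons)

lemma upt_split2: "a \<le> j \<Longrightarrow> j + 2 \<le> c \<Longrightarrow> [a..<c] = [a..<j] @ j # Suc j # [j+2..<c]"
proof -
  assume h: "a \<le> j" "j + 2 \<le> c"
  have "[a..<c] = [a..<j] @ [j..<c]"
    using upt_add_eq_append[of a j "c - j"] h by simp
  also have "[j..<c] = j # Suc j # [j+2..<c]" using h by (simp add: upt_conv_Cons)
  finally show ?thesis .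
qed

lemma sgnr_sq: "sgnr a * sgnr a = 1" by (simp add: sgnr_def)

lemma evq: "even (p::int) \<Longrightarrow> even (p + a - 1) = even (a + 1)" by presburger

lemma par1: "even (p::int) \<Longrightarrow> sgnr ((p + a - 1) * (p + c - 1)) = sgnr ((a+1)*(c+1))"
  by (rule sgnr_cong) (simp only: even_mult_iff evq)


lemma par3: "even (p::int) \<Longrightarrow> sgnr (a * (p + c - 1)) * sgnr (p + c - 1) = sgnr ((a+1)*(c+1))"
  unfolding sgnr_add[symmetric] by (rule sgnr_cong) (simp add: evq; blast)

lemma par4: "even (p::int) \<Longrightarrow> sgnr ((p + a - 1) * c) * sgnr (p + a - 1) = sgnr ((a+1)*(c+1))"
  unfolding sgnr_add[symmetric] by (rule sgnr_cong) (simp add: evq; blast)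

theorem lemma2p4:
  fixes A :: "int \<Rightarrow> 'a::real_vector set" and m :: "'a \<Rightarrow> 'a \<Rightarrow> 'a" and e :: 'a
    and D :: "'a \<Rightarrow> 'a" and a :: 'a and p :: int
    and b xi :: "nat \<Rightarrow> 'a" and q :: "nat \<Rightarrow> int" and n j :: nat
  assumes "dga A m e D"
    and "a \<in> A p" and "even p" and "D a = 0"
    and "\<forall>i\<in>{1..n}. b i \<in> A (q i) \<and> D (b i) = 0"
    and "\<forall>i\<in>{1..n}. xi i \<in> A (p + q i - 1) \<and> D (xi i) = m a (b i)"
    and "1 \<le> j" and "j + 1 \<le> n"
  shows "cform m e (\<lambda>i. p + q i - 1) xi b n =
         sgnr ((q j + 1) * (q (j + 1) + 1)) *\<^sub>R
           cform m e (\<lambda>i. p + q (transpose j (j + 1) i) - 1)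
             (xi \<circ> transpose j (j + 1)) (b \<circ> transpose j (j + 1)) n"
proof -
  note dg = assms(1)
  define t where "t = transpose j (j + 1)"
  define S where "S = sgnr ((q j + 1) * (q (j + 1) + 1))"
  define bar where "bar k = sgnr (p + q k - 1) *\<^sub>R xi k" for k
  define Lc where "Lc i = map bar [1..<i] @ b i # map xi [i+1..<n+1]" for i
  define Ls where "Ls i = map (\<lambda>k. bar (t k)) [1..<i] @ b (t i) # map (\<lambda>k. xi (t k)) [i+1..<n+1]" for i
  have tj: "t j = Suc j" and tSj: "t (Suc j) = j" and to: "\<And>k. k \<noteq> j \<Longrightarrow> k \<noteq> Suc j \<Longrightarrow> t k = k"
    by (auto simp: t_def transpose_def)
  have mt: "map (\<lambda>k. f (t k)) [a..<c] = map f [a..<c]" if "c \<le> j \<or> j + 2 \<le> a" for f :: "nat \<Rightarrow> 'a" and a c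
    by (rule map_cong) (use that in \<open>auto simp: to\<close>)
  have xiA: "xi k \<in> A (p + q k - 1)" if "k \<in> {1..n}" for k using assms(6) that by blast
  have bA: "b k \<in> A (q k)" if "k \<in> {1..n}" for k using assms(5) that by blast
  have barA: "bar k \<in> A (p + q k - 1)" if "k \<in> {1..n}" for k
    unfolding bar_def by (rule subspace_scale[OF dga_sub0[OF dg, rule_format] xiA[OF that]])
  have j1: "j \<in> {1..n}" "Suc j \<in> {1..n}" using assms(7,8) by auto
  have key: "mprod m e (Lc i) = S *\<^sub>R mprod m e (Ls (t i))" if i: "i \<in> {1..n}" for i
  proof -
    consider "i < j" | "i = j" | "i = Suc j" | "Suc j < i" by linarith
    then show ?thesis
    proof cases
      case 1
      let ?P = "map bar [1..<i] @ b i # map xi [i+1..<j]"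
      let ?R = "map xi [j+2..<n+1]"
      have "Lc i = ?P @ xi j # xi (Suc j) # ?R"
        using upt_split2[of "i+1" j "n+1"] 1 assms(8) by (simp add: Lc_def)
      moreover have "Ls (t i) = ?P @ xi (Suc j) # xi j # ?R"
      proof -
        have "map (\<lambda>k. xi (t k)) [i+1..<j] = map xi [i+1..<j]" by (rule mt) simp
        moreover have "map (\<lambda>k. xi (t k)) [j+2..<n+1] = map xi [j+2..<n+1]" by (rule mt) simp
        moreover have "map (\<lambda>k. bar (t k)) [1..<i] = map bar [1..<i]" by (rule mt) (use 1 in simp)
        ultimately show ?thesis
          using upt_split2[of "i+1" j "n+1"] 1 assms(8) to[of i]
          by (simp add: Ls_def tj tSj del: upt_Suc)
      qed
      moreover have "sgnr ((p + q j - 1) * (p + q (Suc j) - 1)) = S"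
        unfolding S_def using par1[OF assms(3)] by simp
      ultimately show ?thesis
        using mprod_swap[OF dg xiA[OF j1(1)] xiA[OF j1(2)], of ?P ?R] by simp
    next
      case 2
      let ?P = "map bar [1..<j]"
      let ?R = "map xi [j+2..<n+1]"
      have LcE: "Lc i = ?P @ b j # xi (Suc j) # ?R"
        using 2 assms(8) by (simp add: Lc_def upt_conv_Cons del: upt_Suc)
      have LsE: "Ls (t i) = ?P @ bar (Suc j) # b j # ?R"
      proof -
        have m1: "map (\<lambda>k. xi (t k)) [j+2..<n+1] = map xi [j+2..<n+1]" by (rule mt) simp
        have m2: "map (\<lambda>k. bar (t k)) [1..<j] = map bar [1..<j]" by (rule mt) simp
        have "Ls (t i) = map (\<lambda>k. bar (t k)) [1..<j] @ [bar (t j)] @ b j # map (\<lambda>k. xi (t k)) [j+2..<n+1]"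
          using 2 assms(7,8) by (simp add: Ls_def tj tSj upt_Suc_append del: upt_Suc)
        also have "\<dots> = ?P @ bar (Suc j) # b j # ?R" unfolding m1 m2 tj by simp
        finally show ?thesis .
      qed
      have e1: "mprod m e (Lc i) = sgnr (q j * (p + q (Suc j) - 1)) *\<^sub>R mprod m e (?P @ xi (Suc j) # b j # ?R)"
        unfolding LcE by (rule mprod_swap[OF dg bA[OF j1(1)] xiA[OF j1(2)]])
      have e2: "mprod m e (?P @ xi (Suc j) # b j # ?R) = sgnr (p + q (Suc j) - 1) *\<^sub>R mprod m e (Ls (t i))"
        unfolding LsE bar_def mprod_scale[OF dg] scaleR_scaleR sgnr_sq by (rule scaleR_one[symmetric])
      have sg: "sgnr (q j * (p + q (Suc j) - 1)) * sgnr (p + q (Suc j) - 1) = S"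
        unfolding S_def using par3[OF assms(3)] by simp
      show ?thesis unfolding e1 e2 scaleR_scaleR sg ..
    next
      case 3
      let ?P = "map bar [1..<j]"
      let ?R = "map xi [j+2..<n+1]"
      have LcE: "Lc i = ?P @ bar j # b (Suc j) # ?R"
        using 3 assms(7,8) by (simp add: Lc_def)
      have LsE: "Ls (t i) = ?P @ b (Suc j) # xi j # ?R"
      proof -
        have "map (\<lambda>k. xi (t k)) [j+2..<n+1] = map xi [j+2..<n+1]" by (rule mt) simp
        moreover have "map (\<lambda>k. bar (t k)) [1..<j] = map bar [1..<j]" by (rule mt) simp
        ultimately show ?thesis
          using 3 assms(7,8) by (simp add: Ls_def tj tSj upt_conv_Cons del: upt_Suc)
      qed
      have e1: "mprod m e (Lc i) = sgnr ((p + q j - 1) * q (Suc j)) *\<^sub>R mprod m e (?P @ b (Suc j) # bar j # ?R)"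
        unfolding LcE by (rule mprod_swap[OF dg barA[OF j1(1)] bA[OF j1(2)]])
      have e2: "mprod m e (?P @ b (Suc j) # bar j # ?R) = sgnr (p + q j - 1) *\<^sub>R mprod m e (Ls (t i))"
        using mprod_scale[OF dg, of "?P @ [b (Suc j)]" "sgnr (p + q j - 1)" "xi j" ?R]
        unfolding LsE by (simp add: bar_def)
      have sg: "sgnr ((p + q j - 1) * q (Suc j)) * sgnr (p + q j - 1) = S"
        unfolding S_def using par4[OF assms(3)] by simp
      show ?thesis unfolding e1 e2 scaleR_scaleR sg ..
    next
      case 4
      let ?P = "map bar [1..<j]"
      let ?R = "map bar [j+2..<i] @ b i # map xi [i+1..<n+1]"
      have "Lc i = ?P @ bar j # bar (Suc j) # ?R"
        using upt_split2[of 1 j i] 4 assms(7) by (simp add: Lc_def)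
      moreover have "Ls (t i) = ?P @ bar (Suc j) # bar j # ?R"
      proof -
        have "map (\<lambda>k. xi (t k)) [i+1..<n+1] = map xi [i+1..<n+1]" by (rule mt) (use 4 in simp)
        moreover have "map (\<lambda>k. bar (t k)) [j+2..<i] = map bar [j+2..<i]" by (rule mt) simp
        moreover have "map (\<lambda>k. bar (t k)) [1..<j] = map bar [1..<j]" by (rule mt) simp
        ultimately show ?thesis
          using upt_split2[of 1 j i] 4 assms(7) to[of i]
          by (simp add: Ls_def tj tSj del: upt_Suc)
      qed
      moreover have "sgnr ((p + q j - 1) * (p + q (Suc j) - 1)) = S"
        unfolding S_def using par1[OF assms(3)] by simp
      ultimately show ?thesis
        using mprod_swap[OF dg barA[OF j1(1)] barA[OF j1(2)], of ?P ?R] by simp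
    qed
  qed
  have bij: "bij_betw t {1..n} {1..n}"
    unfolding t_def by (rule permutes_imp_bij[OF permutes_swap_id]) (use assms(7,8) in auto)
  have L: "cform m e (\<lambda>i. p + q i - 1) xi b n = (\<Sum>i = 1..n. mprod m e (Lc i))"
    by (simp add: cform_alt[OF dg] Lc_def bar_def[abs_def])
  have R: "cform m e (\<lambda>i. p + q (transpose j (j + 1) i) - 1) (xi \<circ> transpose j (j + 1)) (b \<circ> transpose j (j + 1)) n
      = (\<Sum>i = 1..n. mprod m e (Ls i))"
    by (simp add: cform_alt[OF dg] Ls_def bar_def[abs_def] t_def comp_def)
  have "(\<Sum>i = 1..n. mprod m e (Lc i)) = (\<Sum>i = 1..n. S *\<^sub>R mprod m e (Ls (t i)))"
    using key by (rule sum.cong[OF refl])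
  also have "\<dots> = S *\<^sub>R (\<Sum>i = 1..n. mprod m e (Ls (t i)))"
    by (simp add: scaleR_sum_right)
  also have "(\<Sum>i = 1..n. mprod m e (Ls (t i))) = (\<Sum>i = 1..n. mprod m e (Ls i))"
    using sum.reindex_bij_betw[OF bij, of "\<lambda>i. mprod m e (Ls i)"] .
  finally show ?thesis unfolding L R S_def .
qed

end
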